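(* Let $\alpha>0$ be a constant and let $n$ be an integer with \[ 3 \le n < 10+4\alpha . \] Then the solution curve of the generalized Gelfand problem \[ u''+\frac{n-1}{r}u'+\lambda r^{\alpha}e^{u}=0 \quad (0<r<1), \qquad u'(0)=0,\quad u(1)=0, \] makes infinitely many turns. That is, with $w$ and $\lambda(t)$ as in the context, $\lambda'(t)$ changes sign infinitely many times on $(0,\infty)$.
   Context: Here $\lambda>0$ is a parameter. Let $w(t)$ be the solution of the initial value problem \[ w''+\frac{n-1}{t}w'+t^{\alpha}e^{w}=0, \qquad w(0)=0,\quad w'(0)=0 \qquad (t>0). \] This solution is negative and decreasing and is defined for all $t>0$. For each $t>0$, the function $u(r)=w(tr)-w(t)$ solves the boundary value problem with $\lambda=\lambda(t):=t^{\alpha+2}e^{w(t)}$, and all solutions arise in this way. The solution curve is the parametrized curve \[ t\mapsto(\lambda,u(0))=\bigl(t^{\alpha+2}e^{w(t)},\,-w(t)\bigr), \qquad t\in(0,\infty). \] A turn of the curve is a change of sign of $\lambda'(t)$. *)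

theory Defs
  imports "HOL-Analysis.Analysis"
begin

definition infinitely_many_sign_changes :: "(real \<Rightarrow> real) \<Rightarrow> real set \<Rightarrow> bool" where
  "infinitely_many_sign_changes f S \<longleftrightarrow>
     (\<forall>N::nat. \<exists>t::nat \<Rightarrow> real. (\<forall>i\<le>N. t i \<in> S) \<and>
        (\<forall>i<N. t i < t (Suc i) \<and> f (t i) * f (t (Suc i)) < 0))"

definition gelfand_lambda :: "real \<Rightarrow> (real \<Rightarrow> real) \<Rightarrow> real \<Rightarrow> real" where
  "gelfand_lambda \<alpha> w t = t powr (\<alpha> + 2) * exp (w t)"

end

theory Submission
  imports Defs
begin


lemma sturm:
  fixes p p' p'' :: "real \<Rightarrow> real" and S \<epsilon> :: real
  assumes d1: "\<And>s. s > S \<Longrightarrow> (p has_real_derivative p' s) (at s)"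
    and d2: "\<And>s. s > S \<Longrightarrow> (p' has_real_derivative p'' s) (at s)"
    and nn: "\<And>s. s > S \<Longrightarrow> p s \<ge> 0"
    and le: "\<And>s. s > S \<Longrightarrow> p'' s \<le> - \<epsilon> * p s"
    and eps: "\<epsilon> > 0"
    and s0: "s0 > S"
  shows "p s0 = 0"
proof (rule ccontr)
  assume "p s0 \<noteq> 0"
  with nn[OF s0] have ps0: "p s0 > 0" by simp
  have p''nonpos: "s > S \<Longrightarrow> p'' s \<le> 0" for s
  proof -
    assume s: "s > S"
    have "\<epsilon> * p s \<ge> 0" using nn[OF s] eps by simp
    thus ?thesis using le[OF s] by linarith
  qed
  have p'mono: "p' b \<le> p' a" if "S < a" "a \<le> b" for a b
  proof (rule DERIV_nonpos_imp_nonincreasing[OF that(2)])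
    fix x assume "a \<le> x" "x \<le> b"
    hence x: "x > S" using that by simp
    show "\<exists>y. (p' has_real_derivative y) (at x) \<and> y \<le> 0"
      using d2[OF x] p''nonpos[OF x] by blast
  qed
  have p'nn: "p' s \<ge> 0" if s: "s > S" for s
  proof (rule ccontr)
    assume "\<not> p' s \<ge> 0"
    hence neg: "p' s < 0" by simp
    define q where "q = p s + 1"
    define b where "b = s + q / (- p' s)"
    have q: "q > 0" using nn[OF s] unfolding q_def by simp
    have sb: "s \<le> b" unfolding b_def using q neg by (simp add: divide_pos_neg less_imp_le)
    have "(\<lambda>x. p x - p' s * x) b \<le> (\<lambda>x. p x - p' s * x) s"
    proof (rule DERIV_nonpos_imp_nonincreasing[OF sb])
      fix x assume x: "s \<le> x" "x \<le> b"
      show "\<exists>y. ((\<lambda>x. p x - p' s * x) has_real_derivative y) (at x) \<and> y \<le> 0"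
        using x s p'mono[of s x]
        by (intro exI[where x="p' x - p' s * 1"]) (auto intro!: derivative_intros d1)
    qed
    hence "p b \<le> p s + p' s * (b - s)" by (simp add: algebra_simps)
    also have "p' s * (b - s) = - q" unfolding b_def using neg by (simp add: field_simps)
    finally have "p b \<le> -1" unfolding q_def by simp
    moreover have "p b \<ge> 0" using nn[of b] s sb by simp
    ultimately show False by simp
  qed
  have pmono: "p a \<le> p b" if "S < a" "a \<le> b" for a b
  proof (rule DERIV_nonneg_imp_nondecreasing[OF that(2)])
    fix x assume "a \<le> x" "x \<le> b"
    hence x: "x > S" using that by simp
    show "\<exists>y. (p has_real_derivative y) (at x) \<and> y \<ge> 0"
      using d1[OF x] p'nn[OF x] by blast
  qed
  define q where "q = p' s0 + 1"
  define b where "b = s0 + q / (\<epsilon> * p s0)"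
  have q: "q > 0" using p'nn[OF s0] unfolding q_def by simp
  have sb: "s0 \<le> b" unfolding b_def using q ps0 eps by (simp add: divide_nonneg_pos)
  have "(\<lambda>x. p' x + \<epsilon> * p s0 * x) b \<le> (\<lambda>x. p' x + \<epsilon> * p s0 * x) s0"
  proof (rule DERIV_nonpos_imp_nonincreasing[OF sb])
    fix x assume x: "s0 \<le> x" "x \<le> b"
    have "p'' x \<le> - \<epsilon> * p s0"
    proof -
      have "\<epsilon> * p s0 \<le> \<epsilon> * p x" using pmono[of s0 x] x s0 eps by (intro mult_left_mono) auto
      thus ?thesis using le[of x] x s0 by linarith
    qed
    thus "\<exists>y. ((\<lambda>x. p' x + \<epsilon> * p s0 * x) has_real_derivative y) (at x) \<and> y \<le> 0"
      using x s0
      by (intro exI[where x="p'' x + \<epsilon> * p s0 * 1"]) (auto intro!: derivative_intros d2)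
  qed
  hence "p' b \<le> p' s0 - \<epsilon> * p s0 * (b - s0)" by (simp add: algebra_simps)
  also have "\<epsilon> * p s0 * (b - s0) = q" unfolding b_def using ps0 eps by (simp add: field_simps)
  finally have "p' b \<le> -1" unfolding q_def by simp
  moreover have "p' b \<ge> 0" using p'nn[of b] s0 sb by simp
  ultimately show False by simp
qed



locale gel =
  fixes \<alpha> :: real and n :: nat and w w' :: "real \<Rightarrow> real"
  assumes alpha_pos: "\<alpha> > 0"
    and n_ge: "3 \<le> n" and n_lt: "real n < 10 + 4 * \<alpha>"
    and w0: "w 0 = 0" and w'0: "w' 0 = 0"
    and w_deriv: "\<And>t. t \<ge> 0 \<Longrightarrow> (w has_real_derivative w' t) (at t within {0..})"
    and w'_cont: "continuous_on {0..} w'"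
    and ode: "\<And>t. t > 0 \<Longrightarrow>
       (w' has_real_derivative (- (real n - 1) / t * w' t - t powr \<alpha> * exp (w t))) (at t)"
begin

definition "m = real n - 2"
definition "c = m * (\<alpha> + 2)"
definition "vs = ln c"
definition "v s = w (exp s) + (\<alpha> + 2) * s"
definition "y s = exp s * w' (exp s) + (\<alpha> + 2)"

lemma m_ge: "m \<ge> 1" using n_ge unfolding m_def by simp
lemma c_pos: "c > 0" using m_ge alpha_pos unfolding c_def by simp
lemma c_big: "c > m^2/4"
proof -
  have "m < 4*(\<alpha>+2)" using n_lt unfolding m_def by simp
  hence "m*m < m*(4*(\<alpha>+2))" using m_ge by (intro mult_strict_left_mono) auto
  thus ?thesis unfolding c_def power2_eq_square by (simp add: algebra_simps)
qed
lemma exp_vs: "exp vs = c" using c_pos unfolding vs_def by simp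

lemma wD: "t > 0 \<Longrightarrow> (w has_real_derivative w' t) (at t)"
proof -
  assume t: "t > 0"
  have "(w has_real_derivative w' t) (at t within {0..})"
    using w_deriv[of t] t by simp
  moreover have "at t within {0..} = at t"
    by (rule at_within_interior) (use t in simp)
  ultimately show ?thesis by simp
qed

lemma vD: "(v has_real_derivative y s) (at s)"
proof -
  have "((\<lambda>s. w (exp s)) has_real_derivative w' (exp s) * exp s) (at s)"
    by (rule DERIV_chain2[OF wD[OF exp_gt_zero] DERIV_exp])
  hence "((\<lambda>s. w (exp s) + (\<alpha> + 2) * s) has_real_derivative w' (exp s) * exp s + (\<alpha> + 2)) (at s)"
    by (rule DERIV_add) (rule DERIV_cmult_Id)
  moreover have "v = (\<lambda>s. w (exp s) + (\<alpha> + 2) * s)" unfolding v_def by auto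
  ultimately show ?thesis unfolding y_def by (simp add: mult.commute)
qed

lemma yD: "(y has_real_derivative (c - m * y s - exp (v s))) (at s)"
proof -
  have hh: "((\<lambda>s. w' (exp s)) has_real_derivative
     (- (real n - 1) / exp s * w' (exp s) - exp s powr \<alpha> * exp (w (exp s))) * exp s) (at s)"
    by (rule DERIV_chain2[OF ode[OF exp_gt_zero] DERIV_exp])
  have "((\<lambda>s. exp s * w' (exp s) + (\<alpha>+2)) has_real_derivative
     exp s * w' (exp s) + exp s * ((- (real n - 1) / exp s * w' (exp s) - exp s powr \<alpha> * exp (w (exp s))) * exp s)) (at s)"
    by (rule DERIV_cong[OF DERIV_add[OF DERIV_mult[OF DERIV_exp hh] DERIV_const[of "\<alpha>+2"]]]) (simp add: algebra_simps)
  moreover have "exp s * w' (exp s) + exp s * ((- (real n - 1) / exp s * w' (exp s) - exp s powr \<alpha> * exp (w (exp s))) * exp s)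
     = c - m * y s - exp (v s)"
  proof -
    have e: "exp s powr \<alpha> = exp (\<alpha> * s)" by (simp add: powr_def)
    have e2: "exp (v s) = exp (w (exp s)) * exp s * exp s * exp (\<alpha> * s)"
      unfolding v_def by (simp add: exp_add[symmetric] algebra_simps)
    show ?thesis unfolding e e2 c_def m_def y_def by (simp add: field_simps)
  qed
  moreover have "y = (\<lambda>s. exp s * w' (exp s) + (\<alpha>+2))" unfolding y_def by auto
  ultimately show ?thesis by simp
qed

end


lemma abs_exp_sub_one: "\<bar>exp (X::real) - 1\<bar> \<le> exp \<bar>X\<bar> * \<bar>X\<bar>"
proof (cases "X \<ge> 0")
  case True
  have "1 - X \<le> exp (-X)" using exp_ge_add_one_self[of "-X"] by simp
  hence "exp X * (1 - X) \<le> exp X * exp (-X)" by (intro mult_left_mono) auto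
  hence "exp X * (1 - X) \<le> 1" by (simp add: exp_minus field_simps)
  hence "exp X - 1 \<le> exp X * X" by (simp add: algebra_simps)
  moreover have "exp X - 1 \<ge> 0" using True by simp
  ultimately show ?thesis using True by simp
next
  case False
  have "1 + X \<le> exp X" by (rule exp_ge_add_one_self)
  moreover have "exp X \<le> 1" using False by simp
  moreover have "-X \<le> exp (-X) * (-X)" using False by simp
  moreover have "\<bar>exp X - 1\<bar> = 1 - exp X" using False by simp
  moreover have "exp \<bar>X\<bar> * \<bar>X\<bar> = exp (-X) * (-X)" using False by simp
  ultimately show ?thesis by linarith
qed

context gel begin

definition "E s = y s ^ 2 / 2 + exp (v s) - c * v s"

lemma ED: "(E has_real_derivative - m * y s ^ 2) (at s)"
proof -
  have "((\<lambda>s. y s ^ 2 / 2 + exp (v s) - c * v s) has_real_derivative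
     (2 * y s * (c - m * y s - exp (v s))) / 2 + exp (v s) * y s - c * y s) (at s)"
    by (auto intro!: derivative_eq_intros vD yD simp: field_simps)
  moreover have "(2 * y s * (c - m * y s - exp (v s))) / 2 + exp (v s) * y s - c * y s = - m * y s ^ 2"
    by (simp add: power2_eq_square algebra_simps divide_simps)
  moreover have "E = (\<lambda>s. y s ^ 2 / 2 + exp (v s) - c * v s)" unfolding E_def by auto
  ultimately show ?thesis by simp
qed

lemma E_anti: "a \<le> b \<Longrightarrow> E b \<le> E a"
  by (rule DERIV_nonpos_imp_nonincreasing) (use ED m_ge in \<open>auto intro!: exI[where x="- m * y _ ^ 2"]\<close>)

lemma Fle: "S \<le> s \<Longrightarrow> exp (v s) - c * v s \<le> E S"
proof -
  assume "S \<le> s"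
  hence "E s \<le> E S" by (rule E_anti)
  moreover have "exp (v s) - c * v s \<le> E s" unfolding E_def by simp
  ultimately show ?thesis by linarith
qed

lemma tangent: "exp x \<ge> a * (1 + x - ln a)" if "a > 0" for x a :: real
proof -
  have "1 + (x - ln a) \<le> exp (x - ln a)" by (rule exp_ge_add_one_self)
  also have "exp (x - ln a) = exp x / a" using that by (simp add: exp_diff)
  finally show ?thesis using that by (simp add: field_simps)
qed

lemma zD: "((\<lambda>s. y s + m * v s) has_real_derivative c - exp (v s)) (at s)"
proof -
  have "((\<lambda>s. y s + m * v s) has_real_derivative (c - m * y s - exp (v s)) + m * y s) (at s)"
    by (auto intro!: derivative_eq_intros vD yD)
  thus ?thesis by simp
qed

lemma zbound: "\<exists>B. \<forall>s\<ge>S. \<bar>y s + m * v s\<bar> \<le> B"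
proof -
  define lo where "lo = - E S / c"
  define hi where "hi = (E S - 2*c + 2*c*ln(2*c)) / c"
  define Y where "Y = 2 * (E S - c + c * ln c)"
  have "\<bar>y s + m * v s\<bar> \<le> 1 + \<bar>Y\<bar> + m * (\<bar>lo\<bar> + \<bar>hi\<bar>)" if s: "s \<ge> S" for s
  proof -
    have F: "exp (v s) - c * v s \<le> E S" using Fle[OF s] .
    have "exp (v s) > 0" by simp
    hence "- c * v s < E S" using F by linarith
    hence vlo: "v s \<ge> lo" unfolding lo_def using c_pos by (simp add: field_simps)
    have "exp (v s) \<ge> (2*c) * (1 + v s - ln (2*c))" by (rule tangent) (use c_pos in simp)
    hence "c * v s \<le> E S - 2*c + 2*c*ln(2*c)" using F by (simp add: algebra_simps)
    hence vhi: "v s \<le> hi" unfolding hi_def using c_pos by (simp add: field_simps)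
    have "exp (v s) \<ge> c * (1 + v s - ln c)" by (rule tangent) (use c_pos in simp)
    moreover have "y s ^ 2 / 2 + exp (v s) - c * v s \<le> E S"
      using E_anti[OF s] unfolding E_def by simp
    ultimately have "y s ^ 2 \<le> Y" unfolding Y_def by (simp add: algebra_simps)
    moreover have "\<bar>y s\<bar> \<le> 1 + y s ^ 2"
    proof (cases "\<bar>y s\<bar> \<le> 1")
      case True thus ?thesis by (smt (verit) zero_le_power2)
    next
      case False
      hence "\<bar>y s\<bar> * 1 \<le> \<bar>y s\<bar> * \<bar>y s\<bar>" by (intro mult_left_mono) auto
      thus ?thesis by (simp add: power2_eq_square abs_mult_self_eq)
    qed
    ultimately have yb: "\<bar>y s\<bar> \<le> 1 + \<bar>Y\<bar>" by simp
    have "\<bar>v s\<bar> \<le> \<bar>lo\<bar> + \<bar>hi\<bar>" using vlo vhi by linarith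
    hence "m * \<bar>v s\<bar> \<le> m * (\<bar>lo\<bar> + \<bar>hi\<bar>)" using m_ge by (intro mult_left_mono) auto
    moreover have "\<bar>m * v s\<bar> = m * \<bar>v s\<bar>" using m_ge by (simp add: abs_mult)
    ultimately show ?thesis using yb by linarith
  qed
  thus ?thesis by blast
qed

lemma drift_pos: assumes d: "\<delta> > 0" and h: "\<And>s. s \<ge> S1 \<Longrightarrow> c - exp (v s) \<ge> \<delta>" shows False
proof -
  obtain B where B: "\<And>s. s \<ge> S1 \<Longrightarrow> \<bar>y s + m * v s\<bar> \<le> B" using zbound[of S1] by blast
  have B0: "B \<ge> 0" using B[of S1] by simp
  define b where "b = S1 + (2*B+1)/\<delta>"
  have sb: "S1 \<le> b" unfolding b_def using d B0 by simp
  have "(\<lambda>x. y x + m * v x - \<delta> * x) S1 \<le> (\<lambda>x. y x + m * v x - \<delta> * x) b"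
  proof (rule DERIV_nonneg_imp_nondecreasing[OF sb])
    fix x assume x: "S1 \<le> x" "x \<le> b"
    show "\<exists>yy. ((\<lambda>x. y x + m * v x - \<delta> * x) has_real_derivative yy) (at x) \<and> yy \<ge> 0"
      using h[OF x(1)] by (intro exI[where x="(c - exp (v x)) - \<delta> * 1"]) (auto intro!: derivative_intros zD)
  qed
  hence "y b + m * v b \<ge> y S1 + m * v S1 + \<delta> * (b - S1)" by (simp add: algebra_simps)
  moreover have "\<delta> * (b - S1) = 2*B+1" unfolding b_def using d by simp
  ultimately show False using B[of S1] B[of b] sb by simp
qed

lemma drift_neg: assumes d: "\<delta> > 0" and h: "\<And>s. s \<ge> S1 \<Longrightarrow> c - exp (v s) \<le> - \<delta>" shows False
proof -
  obtain B where B: "\<And>s. s \<ge> S1 \<Longrightarrow> \<bar>y s + m * v s\<bar> \<le> B" using zbound[of S1] by blast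
  have B0: "B \<ge> 0" using B[of S1] by simp
  define b where "b = S1 + (2*B+1)/\<delta>"
  have sb: "S1 \<le> b" unfolding b_def using d B0 by simp
  have "(\<lambda>x. y x + m * v x + \<delta> * x) b \<le> (\<lambda>x. y x + m * v x + \<delta> * x) S1"
  proof (rule DERIV_nonpos_imp_nonincreasing[OF sb])
    fix x assume x: "S1 \<le> x" "x \<le> b"
    show "\<exists>yy. ((\<lambda>x. y x + m * v x + \<delta> * x) has_real_derivative yy) (at x) \<and> yy \<le> 0"
      using h[OF x(1)] by (intro exI[where x="(c - exp (v x)) + \<delta> * 1"]) (auto intro!: derivative_intros zD)
  qed
  hence "y b + m * v b \<le> y S1 + m * v S1 - \<delta> * (b - S1)" by (simp add: algebra_simps)
  moreover have "\<delta> * (b - S1) = 2*B+1" unfolding b_def using d by simp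
  ultimately show False using B[of S1] B[of b] sb by simp
qed

lemma y_pos_early: "\<exists>s0\<le>s1. y s0 > 0"
proof -
  obtain d where d: "d > 0" and hd: "\<And>x. x \<in> {0..} \<Longrightarrow> dist x 0 < d \<Longrightarrow> dist (w' x) (w' 0) < 1"
    using w'_cont unfolding continuous_on_iff by (metis atLeast_iff order_refl zero_less_one)
  define t where "t = min (min (d/2) (1/2)) (exp s1)"
  have t0: "t > 0" unfolding t_def using d by simp
  have t1: "t \<le> 1/2" "t < d" "t \<le> exp s1" unfolding t_def using d by auto
  have "\<bar>w' t\<bar> < 1" using hd[of t] t0 t1 w'0 by (simp add: dist_real_def)
  hence "t * \<bar>w' t\<bar> \<le> t * 1" using t0 by (intro mult_left_mono) auto
  moreover have "\<bar>t * w' t\<bar> = t * \<bar>w' t\<bar>" using t0 by (simp add: abs_mult)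
  ultimately have "\<bar>t * w' t\<bar> \<le> 1/2" using t1 by linarith
  hence "y (ln t) > 0" unfolding y_def using t0 alpha_pos by simp
  moreover have "ln t \<le> ln (exp s1)" using t0 t1 by (subst ln_le_cancel_iff) auto
  hence "ln t \<le> s1" by simp
  ultimately show ?thesis by blast
qed

end


lemma exp_le_quad: "x \<le> 0 \<Longrightarrow> exp x \<le> 1 + x + x^2/2" for x :: real
proof -
  assume x: "x \<le> 0"
  have "(\<lambda>z. 1 + z + z^2/2 - exp z) 0 \<le> (\<lambda>z. 1 + z + z^2/2 - exp z) x"
  proof (rule DERIV_nonpos_imp_nonincreasing[OF x])
    fix z assume z: "x \<le> z" "z \<le> 0"
    have "1 + z \<le> exp z" by (rule exp_ge_add_one_self)
    thus "\<exists>yy. ((\<lambda>z. 1 + z + z^2/2 - exp z) has_real_derivative yy) (at z) \<and> yy \<le> 0"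
      by (intro exI[where x="0 + 1 + 2 * z ^ 1 * 1 / 2 - exp z"]) (auto intro!: derivative_eq_intros)
  qed
  thus ?thesis by simp
qed

context gel begin

lemma no_equil: "\<not> (v s1 = vs \<and> y s1 = 0)"
proof
  assume eq: "v s1 = vs \<and> y s1 = 0"
  obtain s0 where s0: "s0 \<le> s1" "y s0 > 0" using y_pos_early[of s1] by blast
  have cont: "continuous_on {s0..s1} (\<lambda>x. v x - vs)"
    by (intro continuous_on_diff continuous_on_const continuous_at_imp_continuous_on ballI DERIV_isCont[OF vD])
  have "bounded ((\<lambda>x. v x - vs) ` {s0..s1})"
    by (rule compact_imp_bounded[OF compact_continuous_image[OF cont compact_Icc]])
  then obtain M where M: "\<And>x. x \<in> {s0..s1} \<Longrightarrow> \<bar>v x - vs\<bar> \<le> M" unfolding bounded_real by blast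
  define C where "C = c * exp M"
  have C0: "C \<ge> 0" unfolding C_def using c_pos by simp
  define K where "K = 1 + C + 2 * m"
  define D where "D x = (v x - vs)^2 + y x ^ 2" for x
  define D' where "D' x = 2 * (v x - vs) * y x + 2 * y x * (c - m * y x - exp (v x))" for x
  have DD: "(D has_real_derivative D' x) (at x)" for x
  proof -
    have "((\<lambda>x. (v x - vs)^2 + y x ^ 2) has_real_derivative D' x) (at x)"
      unfolding D'_def by (auto intro!: derivative_eq_intros vD yD)
    moreover have "D = (\<lambda>x. (v x - vs)^2 + y x ^ 2)" unfolding D_def by auto
    ultimately show ?thesis by simp
  qed
  have key: "K * D x + D' x \<ge> 0" if x: "x \<in> {s0..s1}" for x
  proof -
    define a where "a = v x - vs"
    define b where "b = y x"
    define e where "e = c - exp (v x)"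
    have "exp (v x) = c * exp a" unfolding a_def using exp_vs c_pos by (simp add: exp_diff)
    hence "e = c * (1 - exp a)" unfolding e_def by (simp add: algebra_simps)
    hence "\<bar>e\<bar> = c * \<bar>exp a - 1\<bar>" using c_pos by (simp add: abs_mult abs_minus_commute)
    also have "\<dots> \<le> c * (exp \<bar>a\<bar> * \<bar>a\<bar>)" using c_pos abs_exp_sub_one[of a] by (intro mult_left_mono) auto
    also have "\<dots> \<le> c * (exp M * \<bar>a\<bar>)" using c_pos M[OF x] unfolding a_def by (intro mult_left_mono mult_right_mono) auto
    finally have eb: "\<bar>e\<bar> \<le> C * \<bar>a\<bar>" unfolding C_def by simp
    have h1: "2 * a * b \<ge> - (a^2 + b^2)"
    proof -
      have "(a + b)^2 \<ge> 0" by simp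
      thus ?thesis by (simp add: power2_sum)
    qed
    have h3: "2 * (\<bar>a\<bar> * \<bar>b\<bar>) \<le> a^2 + b^2"
    proof -
      have "(\<bar>a\<bar> - \<bar>b\<bar>)^2 \<ge> 0" by simp
      thus ?thesis by (simp add: power2_diff)
    qed
    have h2: "\<bar>b * e\<bar> \<le> C * (\<bar>a\<bar> * \<bar>b\<bar>)"
    proof -
      have "\<bar>b * e\<bar> = \<bar>b\<bar> * \<bar>e\<bar>" by (simp add: abs_mult)
      also have "\<dots> \<le> \<bar>b\<bar> * (C * \<bar>a\<bar>)" using eb by (intro mult_left_mono) auto
      finally show ?thesis by (simp add: algebra_simps)
    qed
    have h4: "C * (2 * (\<bar>a\<bar> * \<bar>b\<bar>)) \<le> C * (a^2 + b^2)" using h3 C0 by (intro mult_left_mono) auto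
    have h5: "2 * (b * e) \<ge> - 2 * \<bar>b * e\<bar>" by simp
    have h6: "m * b^2 \<le> m * (a^2 + b^2)" using m_ge by (intro mult_left_mono) auto
    have expand: "K * D x + D' x = (a^2+b^2) + C * (a^2+b^2) + 2 * (m * (a^2+b^2)) + 2 * a * b + 2 * (b * e) - 2 * (m * b^2)"
      unfolding K_def D_def D'_def a_def b_def e_def by (simp add: algebra_simps power2_eq_square)
    show ?thesis unfolding expand using h1 h2 h4 h5 h6 by (simp add: algebra_simps)
  qed
  have "(\<lambda>x. exp (K * x) * D x) s0 \<le> (\<lambda>x. exp (K * x) * D x) s1"
  proof (rule DERIV_nonneg_imp_nondecreasing[OF s0(1)])
    fix x assume x: "s0 \<le> x" "x \<le> s1"
    have "exp (K * x) * (K * D x + D' x) \<ge> 0" using key[of x] x by simp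
    thus "\<exists>yy. ((\<lambda>x. exp (K * x) * D x) has_real_derivative yy) (at x) \<and> yy \<ge> 0"
      by (intro exI[where x="exp (K * x) * (K * D x + D' x)"])
         (auto intro!: derivative_eq_intros DD simp: algebra_simps)
  qed
  moreover have "D s1 = 0" unfolding D_def using eq by simp
  ultimately have "exp (K * s0) * D s0 \<le> 0" by simp
  hence "D s0 \<le> 0" by (simp add: mult_le_0_iff)
  moreover have "D s0 \<ge> y s0 ^ 2" unfolding D_def by simp
  moreover have "y s0 ^ 2 > 0" using s0 by simp
  ultimately show False by linarith
qed

lemma equil_tail: assumes "\<And>s. s > S2 \<Longrightarrow> v s = vs" shows False
proof -
  have "y (S2 + 1) = 0"
    by (rule DERIV_local_const[OF vD, of 1]) (use assms in \<open>auto simp: abs_if split: if_splits\<close>)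
  moreover have "v (S2 + 1) = vs" using assms by simp
  ultimately show False using no_equil by blast
qed

end


context gel begin

lemma caseA: assumes neg: "\<And>s. s > S \<Longrightarrow> y s \<le> 0" shows False
proof -
  define S1 where "S1 = S + 1"
  have vmono: "v b \<le> v a" if "S1 \<le> a" "a \<le> b" for a b
  proof (rule DERIV_nonpos_imp_nonincreasing[OF that(2)])
    fix x assume "a \<le> x" "x \<le> b"
    hence "x > S" using that unfolding S1_def by simp
    thus "\<exists>yy. (v has_real_derivative yy) (at x) \<and> yy \<le> 0" using vD neg by blast
  qed
  have vge: "v s \<ge> vs" if s: "s \<ge> S1" for s
  proof (rule ccontr)
    assume "\<not> v s \<ge> vs"
    hence "exp (v s) < exp vs" by simp
    hence d: "c - exp (v s) > 0" using exp_vs by simp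
    show False
    proof (rule drift_pos[OF d, of s])
      fix x assume "x \<ge> s"
      hence "v x \<le> v s" using vmono[of s x] s by simp
      thus "c - exp (v x) \<ge> c - exp (v s)" by simp
    qed
  qed
  define \<epsilon> where "\<epsilon> = c - m^2/4"
  have eps: "\<epsilon> > 0" unfolding \<epsilon>_def using c_big by simp
  define p where "p x = exp (m * x / 2) * (v x - vs)" for x
  define p' where "p' x = exp (m * x / 2) * (m / 2 * (v x - vs) + y x)" for x
  define p'' where "p'' x = exp (m * x / 2) * (m^2 / 4 * (v x - vs) + c - exp (v x))" for x
  have d1: "(p has_real_derivative p' x) (at x)" for x
  proof -
    have "((\<lambda>x. exp (m * x / 2) * (v x - vs)) has_real_derivative p' x) (at x)"
      unfolding p'_def by (auto intro!: derivative_eq_intros vD simp: algebra_simps)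
    moreover have "p = (\<lambda>x. exp (m * x / 2) * (v x - vs))" unfolding p_def by auto
    ultimately show ?thesis by simp
  qed
  have d2: "(p' has_real_derivative p'' x) (at x)" for x
  proof -
    have "((\<lambda>x. exp (m * x / 2) * (m / 2 * (v x - vs) + y x)) has_real_derivative p'' x) (at x)"
      unfolding p''_def by (auto intro!: derivative_eq_intros vD yD simp: field_simps power2_eq_square)
    moreover have "p' = (\<lambda>x. exp (m * x / 2) * (m / 2 * (v x - vs) + y x))" unfolding p'_def by auto
    ultimately show ?thesis by simp
  qed
  have nn: "p x \<ge> 0" if "x > S1" for x unfolding p_def using vge[of x] that by simp
  have le: "p'' x \<le> - \<epsilon> * p x" if "x > S1" for x
  proof -
    define X where "X = v x - vs"
    have "exp (v x) = c * exp X" unfolding X_def using exp_vs c_pos by (simp add: exp_diff)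
    moreover have "c * (1 + X) \<le> c * exp X" using c_pos exp_ge_add_one_self[of X] by (intro mult_left_mono) auto
    ultimately have "m^2/4 * X + c - exp (v x) \<le> - \<epsilon> * X" unfolding \<epsilon>_def by (simp add: algebra_simps)
    hence "exp (m * x / 2) * (m^2/4 * X + c - exp (v x)) \<le> exp (m * x / 2) * (- \<epsilon> * X)"
      by (intro mult_left_mono) auto
    thus ?thesis unfolding p''_def p_def X_def by (simp add: algebra_simps)
  qed
  have "p x = 0" if "x > S1" for x
    by (rule sturm[of S1 p p' p'' \<epsilon>]) (use d1 d2 nn le eps that in auto)
  hence "v x = vs" if "x > S1" for x using that unfolding p_def by simp
  thus False using equil_tail by blast
qed

lemma caseB: assumes pos: "\<And>s. s > S \<Longrightarrow> y s \<ge> 0" shows False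
proof -
  define S1 where "S1 = S + 1"
  have vmono: "v a \<le> v b" if "S1 \<le> a" "a \<le> b" for a b
  proof (rule DERIV_nonneg_imp_nondecreasing[OF that(2)])
    fix x assume "a \<le> x" "x \<le> b"
    hence "x > S" using that unfolding S1_def by simp
    thus "\<exists>yy. (v has_real_derivative yy) (at x) \<and> yy \<ge> 0" using vD pos by blast
  qed
  have vle: "v s \<le> vs" if s: "s \<ge> S1" for s
  proof (rule ccontr)
    assume "\<not> v s \<le> vs"
    hence "exp (v s) > exp vs" by simp
    hence d: "exp (v s) - c > 0" using exp_vs by simp
    show False
    proof (rule drift_neg[OF d, of s])
      fix x assume "x \<ge> s"
      hence "v x \<ge> v s" using vmono[of s x] s by simp
      thus "c - exp (v x) \<le> - (exp (v s) - c)" by simp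
    qed
  qed
  define \<delta>0 where "\<delta>0 = (c - m^2/4) / c"
  have d0: "\<delta>0 > 0" unfolding \<delta>0_def using c_big c_pos by simp
  have "\<exists>S2\<ge>S1. \<forall>s\<ge>S2. v s \<ge> vs - \<delta>0"
  proof (rule ccontr)
    assume H: "\<not> (\<exists>S2\<ge>S1. \<forall>s\<ge>S2. v s \<ge> vs - \<delta>0)"
    have small: "v s < vs - \<delta>0" if s: "s \<ge> S1" for s
    proof (rule ccontr)
      assume "\<not> v s < vs - \<delta>0"
      hence "\<forall>x\<ge>s. v x \<ge> vs - \<delta>0" using vmono[of s] s by fastforce
      thus False using H s by blast
    qed
    have dd: "c - c * exp (- \<delta>0) > 0" using d0 c_pos by simp
    show False
    proof (rule drift_pos[OF dd, of S1])
      fix x assume x: "x \<ge> S1"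
      have "exp (v x) \<le> exp (vs - \<delta>0)" using small[OF x] by simp
      also have "\<dots> = c * exp (- \<delta>0)" using exp_vs by (simp add: exp_diff exp_minus field_simps)
      finally show "c - exp (v x) \<ge> c - c * exp (- \<delta>0)" by simp
    qed
  qed
  then obtain S2 where S2: "S2 \<ge> S1" "\<And>s. s \<ge> S2 \<Longrightarrow> v s \<ge> vs - \<delta>0" by blast
  define \<epsilon> where "\<epsilon> = (c - m^2/4) / 2"
  have eps: "\<epsilon> > 0" unfolding \<epsilon>_def using c_big by simp
  define p where "p x = exp (m * x / 2) * (vs - v x)" for x
  define p' where "p' x = exp (m * x / 2) * (m / 2 * (vs - v x) - y x)" for x
  define p'' where "p'' x = exp (m * x / 2) * (m^2 / 4 * (vs - v x) - c + exp (v x))" for x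
  have d1: "(p has_real_derivative p' x) (at x)" for x
  proof -
    have "((\<lambda>x. exp (m * x / 2) * (vs - v x)) has_real_derivative p' x) (at x)"
      unfolding p'_def by (auto intro!: derivative_eq_intros vD simp: algebra_simps)
    moreover have "p = (\<lambda>x. exp (m * x / 2) * (vs - v x))" unfolding p_def by auto
    ultimately show ?thesis by simp
  qed
  have d2: "(p' has_real_derivative p'' x) (at x)" for x
  proof -
    have "((\<lambda>x. exp (m * x / 2) * (m / 2 * (vs - v x) - y x)) has_real_derivative p'' x) (at x)"
      unfolding p''_def by (auto intro!: derivative_eq_intros vD yD simp: field_simps power2_eq_square)
    moreover have "p' = (\<lambda>x. exp (m * x / 2) * (m / 2 * (vs - v x) - y x))" unfolding p'_def by auto
    ultimately show ?thesis by simp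
  qed
  have nn: "p x \<ge> 0" if "x > S2" for x unfolding p_def using vle[of x] that S2 by simp
  have le: "p'' x \<le> - \<epsilon> * p x" if x: "x > S2" for x
  proof -
    define Y where "Y = vs - v x"
    have Y0: "Y \<ge> 0" "Y \<le> \<delta>0" unfolding Y_def using vle[of x] S2(1) S2(2)[of x] x by auto
    have ex: "exp (v x) = c * exp (-Y)" unfolding Y_def using exp_vs c_pos by (simp add: exp_diff)
    have "exp (-Y) \<le> 1 + (-Y) + (-Y)^2/2" using Y0 by (intro exp_le_quad) simp
    hence "c * exp (-Y) \<le> c * (1 - Y + Y^2/2)" using c_pos by (intro mult_left_mono) auto
    hence hA: "c * exp (-Y) \<le> c - Y * c + Y * (Y * c) / 2" by (simp add: algebra_simps power2_eq_square)
    have "Y * c \<le> \<delta>0 * c" using Y0 c_pos by (intro mult_right_mono) auto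
    hence hB: "Y * (Y * c) \<le> Y * (\<delta>0 * c)" using Y0 by (intro mult_left_mono) auto
    have ceq: "c = \<epsilon> + \<delta>0 * c / 2 + m * m / 4" unfolding \<delta>0_def \<epsilon>_def using c_pos
      by (simp add: field_simps power2_eq_square)
    have hC: "Y * c = Y * \<epsilon> + Y * (\<delta>0 * c) / 2 + Y * (m * m) / 4"
      by (subst ceq) (simp add: algebra_simps)
    have "Y * (m * m) / 4 - c + c * exp (-Y) \<le> - (Y * \<epsilon>)" using hA hB hC by linarith
    hence "m^2/4 * Y - c + exp (v x) \<le> - \<epsilon> * Y" unfolding ex
      by (simp add: algebra_simps power2_eq_square)
    hence "exp (m * x / 2) * (m^2/4 * Y - c + exp (v x)) \<le> exp (m * x / 2) * (- \<epsilon> * Y)"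
      by (intro mult_left_mono) auto
    thus ?thesis unfolding p''_def p_def Y_def by (simp add: algebra_simps)
  qed
  have "p x = 0" if "x > S2" for x
    by (rule sturm[of S2 p p' p'' \<epsilon>]) (use d1 d2 nn le eps that in auto)
  hence "v x = vs" if "x > S2" for x using that unfolding p_def by simp
  thus False using equil_tail by blast
qed

lemma osc: "(\<exists>s>S. y s > 0) \<and> (\<exists>s>S. y s < 0)"
proof (intro conjI)
  show "\<exists>s>S. y s > 0"
  proof (rule ccontr)
    assume "\<not> ?thesis"
    hence "\<And>s. s > S \<Longrightarrow> y s \<le> 0" by (meson not_le)
    thus False by (rule caseA)
  qed
  show "\<exists>s>S. y s < 0"
  proof (rule ccontr)
    assume "\<not> ?thesis"
    hence "\<And>s. s > S \<Longrightarrow> y s \<ge> 0" by (meson not_le)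
    thus False by (rule caseB)
  qed
qed

lemma lamD: "t > 0 \<Longrightarrow> deriv (gelfand_lambda \<alpha> w) t = t powr (\<alpha> + 1) * exp (w t) * y (ln t)"
proof -
  assume t: "t > 0"
  have "((\<lambda>t. t powr (\<alpha> + 2) * exp (w t)) has_real_derivative
      (\<alpha> + 2) * t powr (\<alpha> + 2 - 1) * 1 * exp (w t) + t powr (\<alpha> + 2) * (exp (w t) * w' t)) (at t)"
    using t by (auto intro!: derivative_eq_intros wD)
  moreover have "t powr (\<alpha> + 2) = t powr (\<alpha> + 1) * t"
  proof -
    have "t powr (\<alpha> + 1) * t = t powr (\<alpha> + 1) * t powr 1" using t by (simp only: powr_one[of t] less_imp_le)
    also have "\<dots> = t powr (\<alpha> + 1 + 1)" by (rule powr_add[symmetric])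
    finally have h: "t powr (\<alpha> + 1) * t = t powr (\<alpha> + 1 + 1)" .
    have e: "\<alpha> + 1 + 1 = \<alpha> + 2" by simp
    show ?thesis using h e by metis
  qed
  moreover have "y (ln t) = t * w' t + (\<alpha> + 2)" unfolding y_def using t by simp
  ultimately have "((\<lambda>t. t powr (\<alpha> + 2) * exp (w t)) has_real_derivative
      t powr (\<alpha> + 1) * exp (w t) * y (ln t)) (at t)" by (simp add: algebra_simps)
  moreover have "gelfand_lambda \<alpha> w = (\<lambda>t. t powr (\<alpha> + 2) * exp (w t))"
    unfolding gelfand_lambda_def by auto
  ultimately show ?thesis by (simp add: DERIV_imp_deriv)
qed

end


definition alt_seq :: "(real \<Rightarrow> real) \<Rightarrow> nat \<Rightarrow> real" where
  "alt_seq f = rec_nat (SOME s. f s > 0)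
     (\<lambda>_ si. if f si > 0 then (SOME s. s > si \<and> f s < 0) else (SOME s. s > si \<and> f s > 0))"

lemma alt_seq_props:
  assumes osc: "\<And>S. (\<exists>s>S. f s > 0) \<and> (\<exists>s>S. f s < 0)"
  shows "f (alt_seq f i) \<noteq> 0 \<and> alt_seq f i < alt_seq f (Suc i) \<and> f (alt_seq f i) * f (alt_seq f (Suc i)) < 0"
proof -
  have step: "alt_seq f i < alt_seq f (Suc i) \<and>
      (f (alt_seq f i) > 0 \<longrightarrow> f (alt_seq f (Suc i)) < 0) \<and>
      (\<not> f (alt_seq f i) > 0 \<longrightarrow> f (alt_seq f (Suc i)) > 0)" for i
  proof -
    have e1: "\<exists>s. s > alt_seq f i \<and> f s < 0" and e2: "\<exists>s. s > alt_seq f i \<and> f s > 0"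
      using osc[of "alt_seq f i"] by auto
    have "(SOME s. s > alt_seq f i \<and> f s < 0) > alt_seq f i \<and> f (SOME s. s > alt_seq f i \<and> f s < 0) < 0"
      by (rule someI_ex[OF e1])
    moreover have "(SOME s. s > alt_seq f i \<and> f s > 0) > alt_seq f i \<and> f (SOME s. s > alt_seq f i \<and> f s > 0) > 0"
      by (rule someI_ex[OF e2])
    ultimately show ?thesis unfolding alt_seq_def by auto
  qed
  have nz: "f (alt_seq f i) \<noteq> 0" for i
  proof (cases i)
    case 0
    have "\<exists>s. f s > 0" using osc[of 0] by auto
    hence "f (SOME s. f s > 0) > 0" by (rule someI_ex)
    thus ?thesis using 0 unfolding alt_seq_def by simp
  next
    case (Suc j)
    thus ?thesis using step[of j] by auto
  qed
  show ?thesis using nz[of i] step[of i]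
    by (auto simp: mult_pos_neg mult_neg_pos)
qed

theorem theorem3p1:
  fixes \<alpha> :: real and n :: nat and w w' :: "real \<Rightarrow> real"
  assumes alpha_pos: "\<alpha> > 0"
    and n_ge: "3 \<le> n" and n_lt: "real n < 10 + 4 * \<alpha>"
    and w0: "w 0 = 0" and w'0: "w' 0 = 0"
    and w_deriv: "\<And>t. t \<ge> 0 \<Longrightarrow> (w has_real_derivative w' t) (at t within {0..})"
    and w'_cont: "continuous_on {0..} w'"
    and ode: "\<And>t. t > 0 \<Longrightarrow>
       (w' has_real_derivative (- (real n - 1) / t * w' t - t powr \<alpha> * exp (w t))) (at t)"
  shows "infinitely_many_sign_changes (deriv (gelfand_lambda \<alpha> w)) {0<..}"
proof -
  interpret gel \<alpha> n w w'
    by unfold_locales (use assms in auto)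
  define s where "s = alt_seq y"
  have P: "y (s i) \<noteq> 0 \<and> s i < s (Suc i) \<and> y (s i) * y (s (Suc i)) < 0" for i
    unfolding s_def using alt_seq_props[of y, OF osc] by blast
  define t where "t i = exp (s i)" for i
  have dl: "deriv (gelfand_lambda \<alpha> w) (t i) = exp (s i) powr (\<alpha> + 1) * exp (w (t i)) * y (s i)" for i
    using lamD[of "exp (s i)"] unfolding t_def by simp
  have pos: "exp (s i) powr (\<alpha> + 1) * exp (w (t i)) > 0" for i by simp
  have inc: "t i < t (Suc i)" for i unfolding t_def using P[of i] by simp
  have prod: "deriv (gelfand_lambda \<alpha> w) (t i) * deriv (gelfand_lambda \<alpha> w) (t (Suc i)) < 0" for i
  proof -
    define A where "A = exp (s i) powr (\<alpha> + 1) * exp (w (t i))"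
    define B where "B = exp (s (Suc i)) powr (\<alpha> + 1) * exp (w (t (Suc i)))"
    have "deriv (gelfand_lambda \<alpha> w) (t i) * deriv (gelfand_lambda \<alpha> w) (t (Suc i))
        = (A * B) * (y (s i) * y (s (Suc i)))" unfolding dl A_def B_def by (simp add: algebra_simps)
    moreover have "A * B > 0" unfolding A_def B_def using pos[of i] pos[of "Suc i"] by simp
    ultimately show ?thesis using P[of i] by (simp add: mult_pos_neg)
  qed
  have mem: "t i \<in> {0<..}" for i unfolding t_def by simp
  show ?thesis unfolding infinitely_many_sign_changes_def
    using inc prod mem by blast
qed

end
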